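(* Let $W(D_4)\subset\mathrm{O}_4(\mathbb R)$ be the group of matrices $D\cdot P(\pi)$ with $D=\mathrm{diag}(\varepsilon_1,\dots,\varepsilon_4)$, $\varepsilon_i=\pm1$, $\prod\varepsilon_i=1$, $P(\pi)$ the permutation matrix of $\pi\in\mathfrak S_4$, let $$\rho=\tfrac12\begin{pmatrix}-1&1&1&1\\-1&-1&1&-1\\-1&-1&-1&1\\-1&1&-1&-1\end{pmatrix},$$ and let $\tilde\rho$ be the automorphism $x\mapsto\rho x\rho^{-1}$ of $W(D_4)$. Then $\mathrm{Fix}(\tilde\rho)=\{x\in W(D_4)\mid\rho x\rho^{-1}=x\}$ is isomorphic to the group $\mathbb H^1$ of Hurwitz integral quaternions of norm $1$, a group of order $24$ isomorphic to $\mathfrak Q_8\rtimes\mathfrak C_3$, and this group is isomorphic to the double covering $\tilde{\mathfrak A}_4$ of $\mathfrak A_4$.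
   Context: $\mathbb H^1=\{\pm1,\pm i,\pm j,\pm k\}\cup\{\tfrac12(\pm1\pm i\pm j\pm k)\}$ inside the real quaternions; $\mathfrak Q_8$ is the quaternion group of order $8$, $\mathfrak C_3$ the cyclic group of order $3$ acting by conjugation with $-\tfrac12(1+i+j+k)$, and $\tilde{\mathfrak A}_4$ is the binary tetrahedral group (the nonsplit central extension of $\mathfrak A_4$ by a group of order $2$). *)

theory Defs
  imports "HOL-Analysis.Analysis" "HOL-Algebra.Sym_Groups" "HOL-Algebra.Coset"
begin

text \<open>Indices of the type 4 are 0,1,2,3 (standing for rows/columns 1..4).\<close>

definition ix4 :: "4 \<Rightarrow> nat" where
  "ix4 i = (if i = 0 then 0 else if i = 1 then 1 else if i = 2 then 2 else 3)"

definition diag_mat :: "real^4 \<Rightarrow> real^4^4" where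
  "diag_mat e = (\<chi> i j. if i = j then e $ i else 0)"

definition perm_mat :: "(4 \<Rightarrow> 4) \<Rightarrow> real^4^4" where
  "perm_mat p = (\<chi> i j. if i = p j then 1 else 0)"

definition WD4 :: "(real^4^4) set" where
  "WD4 = {diag_mat e ** perm_mat p | e p.
            (\<forall>i. e $ i = 1 \<or> e $ i = -1) \<and> (\<Prod>i\<in>UNIV. e $ i) = 1 \<and> p permutes UNIV}"

definition rho :: "real^4^4" where
  "rho = (\<chi> i j. (1/2) * real_of_int
     ([[-1, 1, 1, 1], [-1, -1, 1, -1], [-1, -1, -1, 1], [-1, 1, -1, -1]] ! ix4 i ! ix4 j))"

definition Fix_rho :: "(real^4^4) monoid" where
  "Fix_rho = \<lparr> carrier = {x \<in> WD4. rho ** x ** matrix_inv rho = x},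
               mult = (\<lambda>x y. x ** y), one = mat 1 \<rparr>"

datatype quat = Quat (Re: real) (Im1: real) (Im2: real) (Im3: real)

definition qmult :: "quat \<Rightarrow> quat \<Rightarrow> quat" where
  "qmult p q = Quat
     (Re p * Re q - Im1 p * Im1 q - Im2 p * Im2 q - Im3 p * Im3 q)
     (Re p * Im1 q + Im1 p * Re q + Im2 p * Im3 q - Im3 p * Im2 q)
     (Re p * Im2 q - Im1 p * Im3 q + Im2 p * Re q + Im3 p * Im1 q)
     (Re p * Im3 q + Im1 p * Im2 q - Im2 p * Im1 q + Im3 p * Re q)"

definition qconj :: "quat \<Rightarrow> quat" where
  "qconj q = Quat (Re q) (- Im1 q) (- Im2 q) (- Im3 q)"

definition Q8_set :: "quat set" where
  "Q8_set = {Quat s 0 0 0 | s. s \<in> {1,-1}} \<union> {Quat 0 s 0 0 | s. s \<in> {1,-1}}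
          \<union> {Quat 0 0 s 0 | s. s \<in> {1,-1}} \<union> {Quat 0 0 0 s | s. s \<in> {1,-1}}"

definition H1_set :: "quat set" where
  "H1_set = Q8_set \<union>
     {Quat (a/2) (b/2) (c/2) (d/2) | a b c d. a \<in> {1,-1} \<and> b \<in> {1,-1} \<and> c \<in> {1,-1} \<and> d \<in> {1,-1}}"

definition H1 :: "quat monoid" where
  "H1 = \<lparr> carrier = H1_set, mult = qmult, one = Quat 1 0 0 0 \<rparr>"

text \<open>The generator of C3 acts by conjugation with omega = -(1+i+j+k)/2.\<close>
definition omega :: quat where
  "omega = Quat (-1/2) (-1/2) (-1/2) (-1/2)"

definition conj_omega :: "quat \<Rightarrow> quat" where
  "conj_omega x = qmult (qmult omega x) (qconj omega)"

definition Q8_rtimes_C3 :: "(quat \<times> nat) monoid" where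
  "Q8_rtimes_C3 = \<lparr> carrier = Q8_set \<times> {0..<3},
     mult = (\<lambda>(a, m) (b, n). (qmult a ((conj_omega ^^ m) b), (m + n) mod 3)),
     one = (Quat 1 0 0 0, 0) \<rparr>"

text \<open>G is (isomorphic to) the binary tetrahedral group: a nonsplit central extension of
  A4 by a group of order 2.  Such an extension is unique up to isomorphism.\<close>
definition binary_tetrahedral :: "('a, 'b) monoid_scheme \<Rightarrow> bool" where
  "binary_tetrahedral G \<longleftrightarrow> group G \<and>
     (\<exists>Z. subgroup Z G \<and> card Z = 2 \<and>
          (\<forall>z\<in>Z. \<forall>g\<in>carrier G. z \<otimes>\<^bsub>G\<^esub> g = g \<otimes>\<^bsub>G\<^esub> z) \<and>
          (G Mod Z) \<cong> alt_group 4 \<and>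
          \<not> (\<exists>K. subgroup K G \<and> K \<inter> Z = {\<one>\<^bsub>G\<^esub>} \<and> K <#>\<^bsub>G\<^esub> Z = carrier G))"

end

theory Submission
  imports Defs
begin


definition tq :: "int list \<Rightarrow> quat" where
  "tq l = Quat (of_int (l!0)/2) (of_int (l!1)/2) (of_int (l!2)/2) (of_int (l!3)/2)"
definition qmi :: "int list \<Rightarrow> int list \<Rightarrow> int list" where
 "qmi p q = [p!0*q!0 - p!1*q!1 - p!2*q!2 - p!3*q!3,
             p!0*q!1 + p!1*q!0 + p!2*q!3 - p!3*q!2,
             p!0*q!2 - p!1*q!3 + p!2*q!0 + p!3*q!1,
             p!0*q!3 + p!1*q!2 - p!2*q!1 + p!3*q!0]"
definition untq :: "quat \<Rightarrow> int list" where
  "untq q = [\<lfloor>2 * Re q\<rfloor>, \<lfloor>2 * Im1 q\<rfloor>, \<lfloor>2 * Im2 q\<rfloor>, \<lfloor>2 * Im3 q\<rfloor>]"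

lemma untq_tq: "length l = 4 \<Longrightarrow> untq (tq l) = l"
  by (auto simp: untq_def tq_def intro!: nth_equalityI simp: less_Suc_eq numeral_eq_Suc)

definition hq :: "int list \<Rightarrow> int list \<Rightarrow> int list" where
  "hq p q = map (\<lambda>s. s div 2) (qmi p q)"

lemma qmult_tq0: "qmult (tq p) (tq q) = Quat (of_int (qmi p q!0)/4) (of_int (qmi p q!1)/4) (of_int (qmi p q!2)/4) (of_int (qmi p q!3)/4)"
  unfolding qmult_def tq_def qmi_def
  by (simp add: field_simps)
lemma qmult_tq: assumes "qmi p q = map ((*) 2) r" shows "qmult (tq p) (tq q) = tq r"
proof -
  have l: "length r = 4" using arg_cong[OF assms, of length] by (simp add: qmi_def)
  show ?thesis unfolding qmult_tq0 assms using l by (simp add: tq_def)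
qed
lemma qmult_assoc: "qmult (qmult a b) c = qmult a (qmult b c)"
  by (simp add: qmult_def algebra_simps)

lemma qmult_one: "qmult (Quat 1 0 0 0) x = x" "qmult x (Quat 1 0 0 0) = x"
  by (cases x; simp add: qmult_def)+

definition HL :: "int list list" where "HL = [[2,0,0,0], [0,2,0,0], [0,0,2,0], [0,0,0,2], [-2,0,0,0], [0,-2,0,0], [0,0,-2,0], [0,0,0,-2], [1,1,1,1], [1,1,1,-1], [1,1,-1,1], [1,1,-1,-1], [1,-1,1,1], [1,-1,1,-1], [1,-1,-1,1], [1,-1,-1,-1], [-1,1,1,1], [-1,1,1,-1], [-1,1,-1,1], [-1,1,-1,-1], [-1,-1,1,1], [-1,-1,1,-1], [-1,-1,-1,1], [-1,-1,-1,-1]]"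
lemma Q8_eq: "Q8_set = tq ` set (take 8 HL)"
  unfolding Q8_set_def HL_def
  by (auto simp: tq_def)
lemma pm: "(a::real) \<in> {1,-1} \<longleftrightarrow> (\<exists>a'::int. a' \<in> {1,-1} \<and> a = of_int a')"
  by (metis insert_iff of_int_1 of_int_minus singletonD)
lemma s16a: "{Quat (a/2) (b/2) (c/2) (d/2) | a b c d. a \<in> {1,-1::real} \<and> b \<in> {1,-1} \<and> c \<in> {1,-1} \<and> d \<in> {1,-1}}
   = tq ` {[a,b,c,d] | a b c d. a \<in> {1,-1::int} \<and> b \<in> {1,-1} \<and> c \<in> {1,-1} \<and> d \<in> {1,-1}}"
  (is "?A = ?B")
proof
  show "?A \<subseteq> ?B"
  proof
    fix x assume "x \<in> ?A"
    then obtain a b c d where x: "x = Quat (a/2) (b/2) (c/2) (d/2)" and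
      h: "a \<in> {1,-1::real}" "b \<in> {1,-1}" "c \<in> {1,-1}" "d \<in> {1,-1}" by blast
    from h obtain a' b' c' d' where "a' \<in> {1,-1::int}" "b' \<in> {1,-1::int}" "c' \<in> {1,-1::int}" "d' \<in> {1,-1::int}"
      "a = of_int a'" "b = of_int b'" "c = of_int c'" "d = of_int d'" unfolding pm by blast
    then show "x \<in> ?B" unfolding x by (auto simp: tq_def intro!: image_eqI[where x="[a',b',c',d']"])
  qed
next
  show "?B \<subseteq> ?A"
  proof
    fix x assume "x \<in> ?B"
    then obtain a b c d where x: "x = tq [a,b,c,d]" and
      h: "a \<in> {1,-1::int}" "b \<in> {1,-1}" "c \<in> {1,-1}" "d \<in> {1,-1}" by blast
    have "x = Quat (of_int a/2) (of_int b/2) (of_int c/2) (of_int d/2)" by (simp add: x tq_def)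
    moreover have "of_int a \<in> {1,-1::real}" "of_int b \<in> {1,-1::real}" "of_int c \<in> {1,-1::real}" "of_int d \<in> {1,-1::real}"
      using h by auto
    ultimately show "x \<in> ?A" by blast
  qed
qed
lemma s16b: "{[a,b,c,d] | a b c d. a \<in> {1,-1::int} \<and> b \<in> {1,-1} \<and> c \<in> {1,-1} \<and> d \<in> {1,-1}} = set (drop 8 HL)"
  unfolding HL_def by auto
lemma H1_set_eq: "H1_set = tq ` set HL"
proof -
  have "set HL = set (take 8 HL) \<union> set (drop 8 HL)"
    by (metis append_take_drop_id set_append)
  then show ?thesis unfolding H1_set_def Q8_eq s16a s16b by (simp add: image_Un)
qed
definition cq :: "int list \<Rightarrow> int list" where "cq p = [p!0, -p!1, -p!2, -p!3]"

lemma C1: "list_all (\<lambda>p. list_all (\<lambda>q. qmi p q = map ((*) 2) (hq p q) \<and> List.member HL (hq p q)) HL) HL"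
  by code_simp
lemma C2: "list_all (\<lambda>p. List.member HL (cq p) \<and> qmi (cq p) p = [4,0,0,0] \<and> length p = 4) HL"
  by code_simp
lemma C3: "distinct HL \<and> length HL = 24" by code_simp

lemma C1': "\<forall>p\<in>set HL. \<forall>q\<in>set HL. qmi p q = map ((*) 2) (hq p q) \<and> hq p q \<in> set HL"
  using C1 by (simp only: list_all_iff List.member_iff)
lemma C2': "\<forall>p\<in>set HL. cq p \<in> set HL \<and> qmi (cq p) p = [4,0,0,0] \<and> length p = 4"
  using C2 by (simp only: list_all_iff List.member_iff)
lemma HL_mult: "p \<in> set HL \<Longrightarrow> q \<in> set HL \<Longrightarrow> qmult (tq p) (tq q) = tq (hq p q) \<and> hq p q \<in> set HL"
  using C1' qmult_tq by blast

lemma HL_len: "p \<in> set HL \<Longrightarrow> length p = 4"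
  using C2' by blast

lemma tq_inj: "inj_on tq (set HL)"
  by (metis HL_len inj_on_inverseI untq_tq)

lemma H1_car: "carrier H1 = tq ` set HL"
  by (simp add: H1_def H1_set_eq)

lemma tq_one: "tq [2,0,0,0] = Quat 1 0 0 0" by (simp add: tq_def)

lemma group_H1: "group H1"
proof (rule groupI)
  fix x y assume "x \<in> carrier H1" "y \<in> carrier H1"
  then show "x \<otimes>\<^bsub>H1\<^esub> y \<in> carrier H1"
    unfolding H1_car by (auto simp: H1_def HL_mult)
next
  show "\<one>\<^bsub>H1\<^esub> \<in> carrier H1"
    unfolding H1_car by (simp add: H1_def HL_def tq_def)
next
  fix x y z show "x \<otimes>\<^bsub>H1\<^esub> y \<otimes>\<^bsub>H1\<^esub> z = x \<otimes>\<^bsub>H1\<^esub> (y \<otimes>\<^bsub>H1\<^esub> z)"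
    by (simp add: H1_def qmult_assoc)
next
  fix x show "\<one>\<^bsub>H1\<^esub> \<otimes>\<^bsub>H1\<^esub> x = x" by (simp add: H1_def qmult_one)
next
  fix x assume "x \<in> carrier H1"
  then obtain p where p: "p \<in> set HL" "x = tq p" unfolding H1_car by auto
  then have "cq p \<in> set HL" "qmi (cq p) p = map ((*) 2) [2,0,0,0]"
    using C2' by simp_all
  then show "\<exists>y\<in>carrier H1. y \<otimes>\<^bsub>H1\<^esub> x = \<one>\<^bsub>H1\<^esub>"
    unfolding H1_car using p qmult_tq[of "cq p" p "[2,0,0,0]"] tq_one
    by (auto simp: H1_def)
qed

lemma order_H1: "order H1 = 24"
  unfolding order_def H1_car using card_image[OF tq_inj] C3 distinct_card by metis


section \<open>Semidirect product\<close>

definition WL :: "int list list" where "WL = [[2,0,0,0],[-1,-1,-1,-1],[-1,1,1,1]]"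
definition Q8L :: "int list list" where "Q8L = take 8 HL"

lemma D1: "list_all (\<lambda>m. list_all (\<lambda>n. qmi (cq (WL!m)) (WL!((m+n) mod 3)) = map ((*) 2) (WL!n)) [0,1,2]) [0,1,2]"
  by code_simp
lemma D2: "list_all (\<lambda>a. list_all (\<lambda>m. qmi a (WL!m) = map ((*) 2) (hq a (WL!m)) \<and> List.member HL (hq a (WL!m))) [0,1,2]) Q8L"
  by code_simp
lemma D3: "list_all (\<lambda>p. list_ex (\<lambda>a. list_ex (\<lambda>m. hq a (WL!m) = p) [0,1,2]) Q8L) HL"
  by code_simp
lemma D4: "list_all (\<lambda>a. list_all (\<lambda>b. list_all (\<lambda>m.
   qmi (WL!m) b = map ((*) 2) (hq (WL!m) b) \<and>
   qmi (hq (WL!m) b) (cq (WL!m)) = map ((*) 2) (hq (hq (WL!m) b) (cq (WL!m))) \<and>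
   qmi a (hq (hq (WL!m) b) (cq (WL!m))) = map ((*) 2) (hq a (hq (hq (WL!m) b) (cq (WL!m)))) \<and>
   List.member Q8L (hq a (hq (hq (WL!m) b) (cq (WL!m))))) [0,1,2]) Q8L) Q8L"
  by code_simp
lemma D5: "qmi (WL!1) (WL!1) = map ((*) 2) (WL!2) \<and> qmi (cq (WL!1)) (cq (WL!1)) = map ((*) 2) (cq (WL!2))"
  by code_simp

lemma list3: "(\<forall>m\<in>set [0::nat,1,2]. P m) \<longleftrightarrow> (\<forall>m<3. P m)"
  by (auto simp: less_Suc_eq numeral_eq_Suc)

lemma list3e: "(\<exists>m\<in>set [0::nat,1,2]. P m) \<longleftrightarrow> (\<exists>m<3. P m)"
  by (auto simp: less_Suc_eq numeral_eq_Suc)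

lemma D1': "m < 3 \<Longrightarrow> n < 3 \<Longrightarrow> qmult (tq (cq (WL!m))) (tq (WL!((m+n) mod 3))) = tq (WL!n)"
  using D1 qmult_tq unfolding list_all_iff list3 by blast

lemma qconj_tq: "qconj (tq l) = tq (cq l)"
  by (simp add: qconj_def tq_def cq_def)

lemma omega_tq: "omega = tq (WL!1)" by (simp add: omega_def tq_def WL_def)

lemma conj_pow: "m < 3 \<Longrightarrow> (conj_omega ^^ m) b = qmult (qmult (tq (WL!m)) b) (tq (cq (WL!m)))"
proof -
  assume "m < 3"
  then have "m = 0 \<or> m = 1 \<or> m = 2" by auto
  moreover have "(conj_omega ^^ 0) b = qmult (qmult (tq (WL!0)) b) (tq (cq (WL!0)))"
    by (simp add: WL_def cq_def tq_one qmult_one)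
  moreover have "(conj_omega ^^ 1) b = qmult (qmult (tq (WL!1)) b) (tq (cq (WL!1)))"
    by (simp add: conj_omega_def omega_tq qconj_tq)
  moreover have "(conj_omega ^^ 2) b = qmult (qmult (tq (WL!2)) b) (tq (cq (WL!2)))"
  proof -
    have "(conj_omega ^^ 2) b = qmult (qmult (tq (WL!1)) (qmult (qmult (tq (WL!1)) b) (tq (cq (WL!1))))) (tq (cq (WL!1)))"
      by (simp add: conj_omega_def omega_tq qconj_tq numeral_2_eq_2)
    also have "\<dots> = qmult (qmult (qmult (tq (WL!1)) (tq (WL!1))) b) (qmult (tq (cq (WL!1))) (tq (cq (WL!1))))"
      by (simp only: qmult_assoc)
    also have "\<dots> = qmult (qmult (tq (WL!2)) b) (tq (cq (WL!2)))"
      using D5 qmult_tq by metis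
    finally show ?thesis .
  qed
  ultimately show ?thesis by auto
qed

definition fsd :: "quat \<times> nat \<Rightarrow> quat" where "fsd x = qmult (fst x) (tq (WL ! snd x))"

lemma Q8_eq': "Q8_set = tq ` set Q8L" unfolding Q8L_def by (rule Q8_eq)

lemma Q8L_sub: "set Q8L \<subseteq> set HL" unfolding Q8L_def by (meson set_take_subset)

lemma car_sd: "carrier Q8_rtimes_C3 = Q8_set \<times> {0..<3}" by (simp add: Q8_rtimes_C3_def)

lemma fsd_hom: "fsd \<in> hom Q8_rtimes_C3 H1"
proof (rule homI)
  fix x assume "x \<in> carrier Q8_rtimes_C3"
  then obtain a m where x: "x = (tq a, m)" "a \<in> set Q8L" "m < 3" unfolding car_sd Q8_eq' by auto
  then show "fsd x \<in> carrier H1"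
    using D2 qmult_tq unfolding H1_car fsd_def list_all_iff list3 List.member_iff by auto
next
  fix x y assume "x \<in> carrier Q8_rtimes_C3" "y \<in> carrier Q8_rtimes_C3"
  then obtain a m b n where x: "x = (a, m)" "m < 3" and y: "y = (b, n)" "n < 3" unfolding car_sd by auto
  have "fsd (x \<otimes>\<^bsub>Q8_rtimes_C3\<^esub> y) = qmult (qmult a ((conj_omega ^^ m) b)) (tq (WL ! ((m+n) mod 3)))"
    by (simp add: Q8_rtimes_C3_def x y fsd_def)
  also have "\<dots> = qmult a (qmult (tq (WL!m)) (qmult b (qmult (tq (cq (WL!m))) (tq (WL ! ((m+n) mod 3))))))"
    by (simp add: conj_pow x y qmult_assoc)
  also have "\<dots> = qmult a (qmult (tq (WL!m)) (qmult b (tq (WL!n))))"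
    using D1' x y by simp
  also have "\<dots> = fsd x \<otimes>\<^bsub>H1\<^esub> fsd y"
    by (simp add: H1_def fsd_def x y qmult_assoc)
  finally show "fsd (x \<otimes>\<^bsub>Q8_rtimes_C3\<^esub> y) = fsd x \<otimes>\<^bsub>H1\<^esub> fsd y" .
qed

lemma fsd_image: "fsd ` carrier Q8_rtimes_C3 = carrier H1"
proof
  show "fsd ` carrier Q8_rtimes_C3 \<subseteq> carrier H1" using fsd_hom by (auto simp: hom_def)
next
  show "carrier H1 \<subseteq> fsd ` carrier Q8_rtimes_C3"
  proof
    fix x assume "x \<in> carrier H1"
    then obtain p where p: "p \<in> set HL" "x = tq p" unfolding H1_car by auto
    then obtain a m where am: "a \<in> set Q8L" "m < 3" "hq a (WL!m) = p"
      using D3 unfolding list_all_iff list_ex_iff list3e by blast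
    then have "fsd (tq a, m) = x" using D2 qmult_tq p unfolding fsd_def list_all_iff list3 by auto
    moreover have "(tq a, m) \<in> carrier Q8_rtimes_C3" using am unfolding car_sd Q8_eq' by auto
    ultimately show "x \<in> fsd ` carrier Q8_rtimes_C3" by blast
  qed
qed

lemma card_Q8: "card Q8_set = 8"
proof -
  have "inj_on tq (set Q8L)" using tq_inj Q8L_sub inj_on_subset by blast
  moreover have "card (set Q8L) = 8" using C3 unfolding Q8L_def by (simp add: distinct_card)
  ultimately show ?thesis unfolding Q8_eq' by (simp add: card_image)
qed

lemma fsd_inj: "inj_on fsd (carrier Q8_rtimes_C3)"
proof (rule eq_card_imp_inj_on)
  have "finite Q8_set" unfolding Q8_eq' by simp
  then show "finite (carrier Q8_rtimes_C3)" unfolding car_sd by simp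
  show "card (fsd ` carrier Q8_rtimes_C3) = card (carrier Q8_rtimes_C3)"
  proof -
    have "card (fsd ` carrier Q8_rtimes_C3) = 24" using fsd_image order_H1 by (simp add: order_def)
    moreover have "card (carrier Q8_rtimes_C3) = 24" unfolding car_sd card_cartesian_product card_Q8 by simp
    ultimately show ?thesis by simp
  qed
qed

lemma sd_closed: "x \<in> carrier Q8_rtimes_C3 \<Longrightarrow> y \<in> carrier Q8_rtimes_C3 \<Longrightarrow> x \<otimes>\<^bsub>Q8_rtimes_C3\<^esub> y \<in> carrier Q8_rtimes_C3"
proof -
  assume "x \<in> carrier Q8_rtimes_C3" "y \<in> carrier Q8_rtimes_C3"
  then obtain a m b n where x: "x = (tq a, m)" "a \<in> set Q8L" "m < 3" and y: "y = (tq b, n)" "b \<in> set Q8L" "n < 3"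
    unfolding car_sd Q8_eq' by auto
  have "qmult (tq a) ((conj_omega ^^ m) (tq b)) = tq (hq a (hq (hq (WL!m) b) (cq (WL!m))))"
       "hq a (hq (hq (WL!m) b) (cq (WL!m))) \<in> set Q8L"
    using D4 x y qmult_tq unfolding conj_pow[OF x(3)] list_all_iff list3 List.member_iff by auto
  then show ?thesis unfolding car_sd Q8_eq' by (simp add: Q8_rtimes_C3_def x y)
qed

lemma H1_iso_sd: "H1 \<cong> Q8_rtimes_C3"
proof -
  let ?g = "inv_into (carrier Q8_rtimes_C3) fsd"
  have bij: "bij_betw fsd (carrier Q8_rtimes_C3) (carrier H1)"
    using fsd_inj fsd_image by (simp add: bij_betw_def)
  then have bij2: "bij_betw ?g (carrier H1) (carrier Q8_rtimes_C3)" by (rule bij_betw_inv_into)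
  have "?g \<in> hom H1 Q8_rtimes_C3"
  proof (rule homI)
    fix x assume "x \<in> carrier H1" then show "?g x \<in> carrier Q8_rtimes_C3" using bij2 bij_betwE by blast
  next
    fix x y assume xy: "x \<in> carrier H1" "y \<in> carrier H1"
    then have gx: "?g x \<in> carrier Q8_rtimes_C3" "?g y \<in> carrier Q8_rtimes_C3" using bij2 bij_betwE by blast+
    have fx: "fsd (?g x) = x" "fsd (?g y) = y" using xy fsd_image by (simp_all add: f_inv_into_f)
    show "?g (x \<otimes>\<^bsub>H1\<^esub> y) = ?g x \<otimes>\<^bsub>Q8_rtimes_C3\<^esub> ?g y"
    proof (rule inv_into_f_eq[OF fsd_inj])
      show "?g x \<otimes>\<^bsub>Q8_rtimes_C3\<^esub> ?g y \<in> carrier Q8_rtimes_C3" using sd_closed gx by blast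
      show "fsd (?g x \<otimes>\<^bsub>Q8_rtimes_C3\<^esub> ?g y) = x \<otimes>\<^bsub>H1\<^esub> y"
        using fsd_hom gx fx by (simp add: hom_def)
    qed
  qed
  then show ?thesis using bij2 unfolding is_iso_def iso_def by blast
qed


section \<open>Binary tetrahedral\<close>

definition atab :: "(int list \<times> nat list) list" where "atab = [([2,0,0,0],[1,2,3,4]), ([0,2,0,0],[2,1,4,3]), ([0,0,2,0],[3,4,1,2]), ([0,0,0,2],[4,3,2,1]), ([-2,0,0,0],[1,2,3,4]), ([0,-2,0,0],[2,1,4,3]), ([0,0,-2,0],[3,4,1,2]), ([0,0,0,-2],[4,3,2,1]), ([1,1,1,1],[1,3,4,2]), ([1,1,1,-1],[2,3,1,4]), ([1,1,-1,1],[4,1,3,2]), ([1,1,-1,-1],[4,2,1,3]), ([1,-1,1,1],[3,2,4,1]), ([1,-1,1,-1],[2,4,3,1]), ([1,-1,-1,1],[3,1,2,4]), ([1,-1,-1,-1],[1,4,2,3]), ([-1,1,1,1],[1,4,2,3]), ([-1,1,1,-1],[3,1,2,4]), ([-1,1,-1,1],[2,4,3,1]), ([-1,1,-1,-1],[3,2,4,1]), ([-1,-1,1,1],[4,2,1,3]), ([-1,-1,1,-1],[4,1,3,2]), ([-1,-1,-1,1],[2,3,1,4]), ([-1,-1,-1,-1],[1,3,4,2])]"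
definition awit :: "(nat list \<times> (nat \<times> nat \<times> nat \<times> nat)) list" where "awit = [([1,2,3,4],(1,1,1,1)), ([1,3,4,2],(2,3,3,4)), ([1,4,2,3],(2,3,2,4)), ([2,1,4,3],(1,2,3,4)), ([2,3,1,4],(1,2,2,3)), ([2,4,3,1],(1,2,2,4)), ([3,1,2,4],(1,2,1,3)), ([3,2,4,1],(1,3,3,4)), ([3,4,1,2],(1,3,2,4)), ([4,1,3,2],(1,2,1,4)), ([4,2,1,3],(1,3,1,4)), ([4,3,2,1],(1,4,2,3))]"

definition permfun :: "nat list \<Rightarrow> nat \<Rightarrow> nat" where
  "permfun s n = (if n \<in> {1..4} then s ! (n - 1) else n)"
definition pcomp :: "nat list \<Rightarrow> nat list \<Rightarrow> nat list" where
  "pcomp s t = map (\<lambda>x. s ! (x - 1)) t"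
definition hA :: "quat \<Rightarrow> nat \<Rightarrow> nat" where
  "hA q = permfun (the (map_of atab (untq q)))"
definition vp :: "nat list \<Rightarrow> bool" where
  "vp s \<longleftrightarrow> length s = 4 \<and> list_all (\<lambda>t. 1 \<le> t \<and> t \<le> 4) s"

lemma E1: "map fst atab = HL" by code_simp
lemma E2: "list_all (\<lambda>p. list_all (\<lambda>q. map_of atab (hq p q) = Some (pcomp (the (map_of atab p)) (the (map_of atab q)))) HL) HL"
  by code_simp
lemma E3: "list_all (\<lambda>(k,s). vp s \<and> (case map_of awit s of None \<Rightarrow> False | Some (a,b,c,d) \<Rightarrow>
     a \<in> {1..4} \<and> b \<in> {1..4} \<and> c \<in> {1..4} \<and> d \<in> {1..4} \<and> (a = b) = (c = d) \<and>
     list_all (\<lambda>n. s ! (n - 1) = Transposition.transpose a b (Transposition.transpose c d n)) [1,2,3,4])) atab"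
  by code_simp
lemma E4: "distinct (map fst awit) \<and> length awit = 12 \<and> list_all (\<lambda>s. list_ex (\<lambda>k. map_of atab k = Some s) HL) (map fst awit)
   \<and> list_all vp (map fst awit)"
  by code_simp
lemma E5: "list_all (\<lambda>(k,s). (s = [1,2,3,4]) = (k = [2,0,0,0] \<or> k = [-2,0,0,0])) atab"
  by code_simp

lemma vp_nth: "vp s \<Longrightarrow> i < 4 \<Longrightarrow> s ! i \<in> {1..4}"
  unfolding vp_def list_all_iff by (auto dest: nth_mem)

lemma permfun_comp: assumes "vp s" "vp t" shows "permfun s \<circ> permfun t = permfun (pcomp s t)"
proof
  fix n show "(permfun s \<circ> permfun t) n = permfun (pcomp s t) n"
  proof (cases "n \<in> {1..4}")
    case True
    then have "n - 1 < 4" by auto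
    then have "t ! (n - 1) \<in> {1..4}" using vp_nth assms(2) by blast
    then show ?thesis using True assms \<open>n - 1 < 4\<close> by (simp add: permfun_def pcomp_def vp_def)
  next
    case False then show ?thesis by (auto simp: permfun_def)
  qed
qed

lemma permfun_inj: assumes "vp s" "vp t" "permfun s = permfun t" shows "s = t"
proof (rule nth_equalityI)
  show "length s = length t" using assms by (simp add: vp_def)
  fix i assume "i < length s"
  then have "i < 4" using assms by (simp add: vp_def)
  have "permfun s (Suc i) = permfun t (Suc i)" using assms(3) by simp
  then show "s ! i = t ! i" using \<open>i < 4\<close> by (simp add: permfun_def)
qed

lemma permfun_id: "permfun [1,2,3,4] = id"
proof
  fix n show "permfun [1,2,3,4] n = id n"
    by (cases "n \<in> {1..4}") (auto simp: permfun_def numeral_eq_Suc le_Suc_eq)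
qed

lemma permfun_transp:
  assumes "vp s" "a \<in> {1..4}" "b \<in> {1..4}" "c \<in> {1..4}" "d \<in> {1..4}"
    "\<forall>n\<in>set [1,2,3,4]. s ! (n - 1) = Transposition.transpose a b (Transposition.transpose c d n)"
  shows "permfun s = Transposition.transpose a b \<circ> Transposition.transpose c d"
proof
  fix n show "permfun s n = (Transposition.transpose a b \<circ> Transposition.transpose c d) n"
  proof (cases "n \<in> {1..4}")
    case True
    then have "n \<in> set [1,2,3,4]" by auto
    then have "s ! (n - 1) = Transposition.transpose a b (Transposition.transpose c d n)" using assms(6) by blast
    then show ?thesis using True by (simp add: permfun_def)
  next
    case False
    then have "n \<noteq> a" "n \<noteq> b" "n \<noteq> c" "n \<noteq> d" using assms by auto
    then show ?thesis using False by (auto simp: permfun_def transpose_def)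
  qed
qed

lemma transp_alt:
  assumes "a \<in> {1..4}" "b \<in> {1..4}" "c \<in> {1..4}" "d \<in> {1..4}" "(a = b) = (c = d)"
  shows "Transposition.transpose a b \<circ> Transposition.transpose c d \<in> carrier (alt_group 4)"
proof -
  have "Transposition.transpose a b \<circ> Transposition.transpose c d permutes {1..4}"
    using assms by (intro permutes_compose permutes_swap_id) auto
  moreover have "evenperm (Transposition.transpose a b \<circ> Transposition.transpose c d)"
    using assms(5) by (simp add: evenperm_comp permutation_swap_id evenperm_swap)
  ultimately show ?thesis by (simp add: alt_group_carrier)
qed

lemma atab_val: "(k, s) \<in> set atab \<Longrightarrow> vp s \<and> permfun s \<in> carrier (alt_group 4)"
proof -
  assume ks: "(k, s) \<in> set atab"
  then have h: "vp s \<and> (case map_of awit s of None \<Rightarrow> False | Some (a,b,c,d) \<Rightarrow>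
     a \<in> {1..4} \<and> b \<in> {1..4} \<and> c \<in> {1..4} \<and> d \<in> {1..4} \<and> (a = b) = (c = d) \<and>
     list_all (\<lambda>n. s ! (n - 1) = Transposition.transpose a b (Transposition.transpose c d n)) [1,2,3,4])"
    using E3 unfolding list_all_iff by fastforce
  then obtain a b c d where "map_of awit s = Some (a,b,c,d)" by (auto split: option.splits)
  with h have "a \<in> {1..4}" "b \<in> {1..4}" "c \<in> {1..4}" "d \<in> {1..4}" "(a = b) = (c = d)"
     "\<forall>n\<in>set [1,2,3,4]. s ! (n - 1) = Transposition.transpose a b (Transposition.transpose c d n)" "vp s"
    by (simp_all add: list_all_iff)
  then show ?thesis using permfun_transp transp_alt by simp
qed

lemma atab_lookup: "k \<in> set HL \<Longrightarrow> \<exists>s. map_of atab k = Some s \<and> (k, s) \<in> set atab"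
proof -
  assume "k \<in> set HL"
  then have "k \<in> fst ` set atab" using E1 by (metis list.set_map)
  then obtain s where "map_of atab k = Some s" by (meson map_of_eq_None_iff not_None_eq)
  then show ?thesis by (auto intro: map_of_SomeD)
qed

lemma hA_tq: "k \<in> set HL \<Longrightarrow> hA (tq k) = permfun (the (map_of atab k))"
  by (simp add: hA_def untq_tq HL_len)

lemma hA_hom: "hA \<in> hom H1 (alt_group 4)"
proof (rule homI)
  fix x assume "x \<in> carrier H1"
  then obtain k where k: "k \<in> set HL" "x = tq k" unfolding H1_car by auto
  then obtain s where "map_of atab k = Some s" "(k, s) \<in> set atab" using atab_lookup by blast
  then show "hA x \<in> carrier (alt_group 4)" using k atab_val hA_tq by auto
next
  fix x y assume "x \<in> carrier H1" "y \<in> carrier H1"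
  then obtain p q where pq: "p \<in> set HL" "x = tq p" "q \<in> set HL" "y = tq q" unfolding H1_car by auto
  obtain s where s: "map_of atab p = Some s" "(p, s) \<in> set atab" using atab_lookup pq by blast
  obtain t where t: "map_of atab q = Some t" "(q, t) \<in> set atab" using atab_lookup pq by blast
  have m: "map_of atab (hq p q) = Some (pcomp s t)"
    using E2 pq s t unfolding list_all_iff by auto
  have "hA (x \<otimes>\<^bsub>H1\<^esub> y) = hA (tq (hq p q))" using HL_mult pq by (simp add: H1_def)
  also have "\<dots> = permfun (pcomp s t)" using HL_mult pq m hA_tq by simp
  also have "\<dots> = permfun s \<circ> permfun t" using permfun_comp atab_val s t by metis
  also have "\<dots> = hA x \<otimes>\<^bsub>alt_group 4\<^esub> hA y" using pq s t hA_tq by (simp add: alt_group_mult)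
  finally show "hA (x \<otimes>\<^bsub>H1\<^esub> y) = hA x \<otimes>\<^bsub>alt_group 4\<^esub> hA y" .
qed

lemma card_alt4: "card (carrier (alt_group 4)) = 12"
  using alt_group_card_carrier[of 4] by (simp add: fact_numeral)

lemma hA_onto: "hA ` carrier H1 = carrier (alt_group 4)"
proof (rule card_subset_eq)
  show "finite (carrier (alt_group 4))" using card_alt4 card_ge_0_finite by force
  show sub: "hA ` carrier H1 \<subseteq> carrier (alt_group 4)" using hA_hom by (auto simp: hom_def)
  have "permfun ` set (map fst awit) \<subseteq> hA ` carrier H1"
  proof
    fix f assume "f \<in> permfun ` set (map fst awit)"
    then obtain s where s: "s \<in> set (map fst awit)" "f = permfun s" by auto
    then obtain k where "k \<in> set HL" "map_of atab k = Some s" using E4 unfolding list_all_iff list_ex_iff by blast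
    then show "f \<in> hA ` carrier H1" using s hA_tq unfolding H1_car by force
  qed
  moreover have "card (permfun ` set (map fst awit)) = 12"
  proof -
    have "inj_on permfun (set (map fst awit))"
    proof (rule inj_onI)
      fix s t assume "s \<in> set (map fst awit)" "t \<in> set (map fst awit)" "permfun s = permfun t"
      moreover have "\<forall>s\<in>set (map fst awit). vp s" using E4 unfolding list_all_iff by (simp add: image_iff)
      ultimately show "s = t" using permfun_inj by blast
    qed
    moreover have "card (set (map fst awit)) = 12" using E4 distinct_card by (metis length_map)
    ultimately show ?thesis by (simp add: card_image)
  qed
  ultimately have "12 \<le> card (hA ` carrier H1)"
    by (metis card_mono finite_imageI finite_set H1_car)
  moreover have "card (hA ` carrier H1) \<le> 12"
    using card_mono[OF \<open>finite (carrier (alt_group 4))\<close> sub] card_alt4 by simp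
  ultimately show "card (hA ` carrier H1) = card (carrier (alt_group 4))" using card_alt4 by simp
qed

definition Zs :: "quat set" where "Zs = {Quat 1 0 0 0, Quat (-1) 0 0 0}"

lemma kernel_hA: "kernel H1 (alt_group 4) hA = Zs"
proof -
  have "x \<in> kernel H1 (alt_group 4) hA \<longleftrightarrow> x \<in> Zs" for x
  proof
    assume "x \<in> kernel H1 (alt_group 4) hA"
    then have x: "x \<in> carrier H1" "hA x = id" by (auto simp: kernel_def alt_group_one)
    then obtain k where k: "k \<in> set HL" "x = tq k" unfolding H1_car by auto
    then obtain s where s: "map_of atab k = Some s" "(k, s) \<in> set atab" using atab_lookup by blast
    have "permfun s = permfun [1,2,3,4]" using x k s hA_tq permfun_id by simp
    then have "s = [1,2,3,4]" using permfun_inj atab_val s by (simp add: vp_def)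
    then have "k = [2,0,0,0] \<or> k = [-2,0,0,0]" using E5 s unfolding list_all_iff by fastforce
    then show "x \<in> Zs" using k by (auto simp: Zs_def tq_def)
  next
    assume "x \<in> Zs"
    then have "x = tq [2,0,0,0] \<or> x = tq [-2,0,0,0]" by (auto simp: Zs_def tq_def)
    then obtain k where k: "k \<in> {[2,0,0,0], [-2,0,0,0]}" "x = tq k" by blast
    then have kH: "k \<in> set HL" by (auto simp: HL_def)
    then obtain s where s: "map_of atab k = Some s" "(k, s) \<in> set atab" using atab_lookup by blast
    then have "s = [1,2,3,4]" using E5 k unfolding list_all_iff by fastforce
    then show "x \<in> kernel H1 (alt_group 4) hA"
      using k kH s hA_tq permfun_id unfolding kernel_def alt_group_one H1_car by auto
  qed
  then show ?thesis by blast
qed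

lemma Mod_iso: "H1 Mod Zs \<cong> alt_group 4"
proof -
  interpret group_hom H1 "alt_group 4" hA
    by (intro group_hom.intro group_hom_axioms.intro group_H1 alt_group_is_group hA_hom)
  show ?thesis using FactGroup_iso[OF hA_onto] kernel_hA by simp
qed


lemma Zs_car: "Zs \<subseteq> carrier H1"
proof -
  have "tq [2,0,0,0] \<in> carrier H1" "tq [-2,0,0,0] \<in> carrier H1" unfolding H1_car by (auto simp: HL_def)
  then show ?thesis by (simp add: Zs_def tq_def)
qed

lemma Zs_sub: "subgroup Zs H1"
proof (rule group.subgroupI[OF group_H1 Zs_car])
  show "Zs \<noteq> {}" by (simp add: Zs_def)
  fix a assume a: "a \<in> Zs"
  then have "a \<otimes>\<^bsub>H1\<^esub> a = \<one>\<^bsub>H1\<^esub>" by (auto simp: Zs_def H1_def qmult_def)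
  then have "inv\<^bsub>H1\<^esub> a = a" using group.inv_equality[OF group_H1] a Zs_car by blast
  then show "inv\<^bsub>H1\<^esub> a \<in> Zs" using a by simp
next
  fix a b assume "a \<in> Zs" "b \<in> Zs"
  then show "a \<otimes>\<^bsub>H1\<^esub> b \<in> Zs" by (auto simp: Zs_def H1_def qmult_def)
qed

lemma Zs_card: "card Zs = 2" by (simp add: Zs_def)

lemma Zs_central: "\<forall>z\<in>Zs. \<forall>g\<in>carrier H1. z \<otimes>\<^bsub>H1\<^esub> g = g \<otimes>\<^bsub>H1\<^esub> z"
  by (auto simp: Zs_def H1_def qmult_def)

lemma nonsplit: "\<not> (\<exists>K. subgroup K H1 \<and> K \<inter> Zs = {\<one>\<^bsub>H1\<^esub>} \<and> K <#>\<^bsub>H1\<^esub> Zs = carrier H1)"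
proof
  assume "\<exists>K. subgroup K H1 \<and> K \<inter> Zs = {\<one>\<^bsub>H1\<^esub>} \<and> K <#>\<^bsub>H1\<^esub> Zs = carrier H1"
  then obtain K where K: "subgroup K H1" "K \<inter> Zs = {\<one>\<^bsub>H1\<^esub>}" "K <#>\<^bsub>H1\<^esub> Zs = carrier H1" by blast
  have "tq [0,2,0,0] \<in> carrier H1" unfolding H1_car by (auto simp: HL_def)
  then have "Quat 0 1 0 0 \<in> K <#>\<^bsub>H1\<^esub> Zs" using K(3) by (simp add: tq_def)
  then obtain k z where kz: "k \<in> K" "z \<in> Zs" "Quat 0 1 0 0 = qmult k z"
    unfolding set_mult_def by (auto simp: H1_def)
  obtain k0 k1 k2 k3 where k: "k = Quat k0 k1 k2 k3" by (cases k)
  from kz(2,3) have "k = Quat 0 1 0 0 \<or> k = Quat 0 (-1) 0 0"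
    unfolding k by (auto simp: Zs_def qmult_def)
  then have "k \<otimes>\<^bsub>H1\<^esub> k = Quat (-1) 0 0 0" by (auto simp: H1_def qmult_def)
  moreover have "k \<otimes>\<^bsub>H1\<^esub> k \<in> K" using K(1) kz(1) by (simp add: subgroup.m_closed)
  ultimately have "Quat (-1) 0 0 0 \<in> K \<inter> Zs" by (simp add: Zs_def)
  then show False using K(2) by (simp add: H1_def)
qed

lemma bt_H1: "binary_tetrahedral H1"
  unfolding binary_tetrahedral_def
  using group_H1 Zs_sub Zs_card Zs_central Mod_iso nonsplit by blast




lemma ix4_vals: "ix4 0 = 0" "ix4 1 = 1" "ix4 2 = 2" "ix4 3 = 3" "ix4 4 = 0"
  by (simp_all add: ix4_def)

definition n4 :: "nat \<Rightarrow> 4" where "n4 a = of_nat a"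

lemma ix4_lt: "ix4 i < 4" by (simp add: ix4_def)

lemma ix4_n4: "a < 4 \<Longrightarrow> ix4 (n4 a) = a"
  by (auto simp: n4_def ix4_def less_Suc_eq numeral_eq_Suc)

lemma n4_ix4: "n4 (ix4 i) = i"
  using exhaust_4[of i] by (auto simp: n4_def ix4_def)

lemma ix4_inj: "ix4 i = ix4 j \<longleftrightarrow> i = j"
  by (metis n4_ix4)

lemma all4: "(\<forall>i::4. P (ix4 i)) \<longleftrightarrow> (\<forall>a<4. P a)"
  by (metis ix4_lt ix4_n4)

lemma sum_ix4: "(\<Sum>k\<in>(UNIV::4 set). h (ix4 k)) = h 0 + h 1 + h 2 + h (3::nat)"
  by (simp add: sum_4 ix4_vals add_ac)

lemma lt4_cases: "(t::nat) < 4 \<Longrightarrow> t = 0 \<or> t = 1 \<or> t = 2 \<or> t = 3" by auto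

definition sm :: "int list \<Rightarrow> nat list \<Rightarrow> real^4^4" where
  "sm g p = (\<chi> i j. if ix4 i = p ! ix4 j then of_int (g ! ix4 j) else 0)"

definition pv :: "nat list \<Rightarrow> bool" where "pv p \<longleftrightarrow> length p = 4 \<and> list_all (\<lambda>x. x < 4) p"

lemma pv_nth: "pv p \<Longrightarrow> a < 4 \<Longrightarrow> p ! a < 4"
  unfolding pv_def list_all_iff by (auto dest: nth_mem)

definition fcg :: "int list \<Rightarrow> nat list \<Rightarrow> int list \<Rightarrow> nat list \<Rightarrow> int list" where
  "fcg g p g' p' = map (\<lambda>j. g ! (p' ! j) * g' ! j) [0..<4]"
definition fcp :: "nat list \<Rightarrow> nat list \<Rightarrow> nat list" where
  "fcp p p' = map (\<lambda>j. p ! (p' ! j)) [0..<4]"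

lemma sm_mult: assumes "pv p'" shows "sm g p ** sm g' p' = sm (fcg g p g' p') (fcp p p')"
proof -
  have "(sm g p ** sm g' p') $ i $ j = sm (fcg g p g' p') (fcp p p') $ i $ j" for i j
  proof -
    let ?t = "p' ! ix4 j"
    have t: "?t < 4" using pv_nth[OF assms ix4_lt] .
    show ?thesis using lt4_cases[OF t] ix4_lt[of j]
      by (auto simp: matrix_matrix_mult_def sm_def sum_4 ix4_vals fcg_def fcp_def)
  qed
  then show ?thesis by (simp add: vec_eq_iff)
qed

definition RR :: "int list list" where "RR = [[-1, 1, 1, 1], [-1, -1, 1, -1], [-1, -1, -1, 1], [-1, 1, -1, -1]]"

lemma rho_RR: "rho $ i $ j = 1/2 * of_int (RR ! ix4 i ! ix4 j)"
  by (simp add: rho_def RR_def)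

definition rhoT :: "real^4^4" where "rhoT = (\<chi> i j. rho $ j $ i)"

lemma rho_rhoT: "rho ** rhoT = mat 1" "rhoT ** rho = mat 1"
  by (simp_all add: vec_eq_iff forall_4 sum_4 matrix_matrix_mult_def mat_def rho_RR rhoT_def RR_def ix4_vals)

lemma matrix_inv_rho: "matrix_inv rho = rhoT"
proof -
  have u: "A = rhoT" if "rho ** A = mat 1 \<and> A ** rho = mat 1" for A :: "real^4^4"
  proof -
    have "A = A ** (rho ** rhoT)" by (simp add: rho_rhoT matrix_mul_rid)
    also have "\<dots> = (A ** rho) ** rhoT" by (simp add: matrix_mul_assoc)
    also have "\<dots> = rhoT" using that by (simp add: matrix_mul_lid)
    finally show ?thesis .
  qed
  have "rho ** rhoT = mat 1 \<and> rhoT ** rho = mat 1" using rho_rhoT by simp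
  then have "rho ** matrix_inv rho = mat 1 \<and> matrix_inv rho ** rho = mat 1"
    unfolding matrix_inv_def by (rule someI)
  then show ?thesis using u by blast
qed

lemma fix_iff: "rho ** x ** matrix_inv rho = x \<longleftrightarrow> rho ** x = x ** rho"
proof
  assume h: "rho ** x ** matrix_inv rho = x"
  have "rho ** x = rho ** x ** (rhoT ** rho)" by (simp add: rho_rhoT matrix_mul_rid)
  also have "\<dots> = (rho ** x ** rhoT) ** rho" by (simp add: matrix_mul_assoc)
  finally show "rho ** x = x ** rho" using h matrix_inv_rho by simp
next
  assume h: "rho ** x = x ** rho"
  have "rho ** x ** matrix_inv rho = x ** (rho ** rhoT)" by (simp add: h matrix_inv_rho matrix_mul_assoc)
  then show "rho ** x ** matrix_inv rho = x" by (simp add: rho_rhoT matrix_mul_rid)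
qed

definition cnd :: "int list \<Rightarrow> nat list \<Rightarrow> nat \<Rightarrow> nat \<Rightarrow> bool" where
  "cnd g p a b \<longleftrightarrow> RR ! a ! (p ! b) * g ! b =
     (if a = p!0 then g!0 * RR!0!b else 0) + (if a = p!1 then g!1 * RR!1!b else 0) +
     (if a = p!2 then g!2 * RR!2!b else 0) + (if a = p!3 then g!3 * RR!3!b else 0)"

lemma comm_iff: assumes "pv p"
  shows "rho ** sm g p = sm g p ** rho \<longleftrightarrow> (\<forall>a<4. \<forall>b<4. cnd g p a b)"
proof -
  have L: "(rho ** sm g p) $ i $ j = 1/2 * of_int (RR ! ix4 i ! (p ! ix4 j) * g ! ix4 j)" for i j
  proof -
    let ?t = "p ! ix4 j"
    have t: "?t < 4" using pv_nth[OF assms ix4_lt] .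
    show ?thesis using lt4_cases[OF t]
      by (auto simp: matrix_matrix_mult_def sm_def sum_4 ix4_vals rho_RR)
  qed
  have R: "(sm g p ** rho) $ i $ j = 1/2 * of_int (
     (if ix4 i = p!0 then g!0 * RR!0!ix4 j else 0) + (if ix4 i = p!1 then g!1 * RR!1!ix4 j else 0) +
     (if ix4 i = p!2 then g!2 * RR!2!ix4 j else 0) + (if ix4 i = p!3 then g!3 * RR!3!ix4 j else 0))" for i j
    by (simp add: matrix_matrix_mult_def sm_def rho_RR sum_4 ix4_vals algebra_simps)
  have "rho ** sm g p = sm g p ** rho \<longleftrightarrow> (\<forall>i j. cnd g p (ix4 i) (ix4 j))"
  proof -
    have eq: "\<And>X Y. (1/2 * (of_int X::real) = 1/2 * of_int Y) \<longleftrightarrow> X = Y" by simp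
    show ?thesis unfolding vec_eq_iff L R eq cnd_def by (rule refl)
  qed
  also have "\<dots> \<longleftrightarrow> (\<forall>a<4. \<forall>b<4. cnd g p a b)"
    using all4[of "\<lambda>a. \<forall>j. cnd g p a (ix4 j)"] all4 by simp
  finally show ?thesis .
qed


lemma four0: "(4::4) = 0" by simp

lemma prod_4: "prod f (UNIV::4 set) = f 1 * f 2 * f 3 * f 4"
  unfolding UNIV_4 by (simp add: ac_simps)

lemma DP: "(diag_mat e ** perm_mat p) $ i $ j = (if i = p j then e $ i else 0)"
proof -
  have "(diag_mat e ** perm_mat p) $ i $ j = (\<Sum>k\<in>UNIV. if k = i then e $ i * (if i = p j then 1 else 0) else 0)"
    unfolding matrix_matrix_mult_def diag_mat_def perm_mat_def by (simp only: vec_lambda_beta, rule sum.cong, auto)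
  also have "\<dots> = (if i = p j then e $ i else 0)" by simp
  finally show ?thesis .
qed

definition VL :: "(int list \<times> nat list) list" where
  "VL = List.product (filter (\<lambda>g. prod_list g = 1) (List.n_lists 4 [1,-1])) (filter distinct (List.n_lists 4 [0,1,2,3]))"

lemma n4_vals: "n4 0 = 0" "n4 1 = 1" "n4 2 = 2" "n4 3 = 3" "n4 (Suc 0) = 1" by (simp_all add: n4_def)

lemma upt4: "[0..<4] = [0::nat,1,2,3]" by (simp add: upt_rec)

lemma WD4_sub: assumes "x \<in> WD4" shows "\<exists>g p. (g, p) \<in> set VL \<and> x = sm g p"
proof -
  obtain e p where x: "x = diag_mat e ** perm_mat p" and e: "\<forall>i. e $ i = 1 \<or> e $ i = -1"
    and pe: "(\<Prod>i\<in>UNIV. e $ i) = 1" and pp: "p permutes UNIV"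
    using assms unfolding WD4_def by blast
  define gl :: "int list" where "gl = map (\<lambda>j. if e $ p (n4 j) = 1 then 1 else -1) [0..<4]"
  define pl where "pl = map (\<lambda>j. ix4 (p (n4 j))) [0..<4]"
  have oe: "of_int (if e $ k = 1 then 1 else -1) = e $ k" for k using e[rule_format, of k] by auto
  have "x = sm gl pl"
  proof -
    have "x $ i $ j = sm gl pl $ i $ j" for i j
    proof -
      have "pl ! ix4 j = ix4 (p j)" "gl ! ix4 j = (if e $ p j = 1 then 1 else -1)"
        using ix4_lt[of j] by (simp_all add: pl_def gl_def n4_ix4)
      then show ?thesis unfolding x DP sm_def using oe by (simp add: ix4_inj)
    qed
    then show ?thesis by (simp add: vec_eq_iff)
  qed
  moreover have "gl \<in> set (List.n_lists 4 [1,-1])" unfolding set_n_lists gl_def by auto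
  moreover have "pl \<in> set (List.n_lists 4 [0,1,2,3])"
  proof -
    have "set pl \<subseteq> set [0,1,2,3]"
    proof
      fix y assume "y \<in> set pl" then obtain k where "y = ix4 k" by (auto simp: pl_def)
      then show "y \<in> set [0,1,2,3]" using ix4_lt[of k] by auto
    qed
    moreover have "length pl = 4" by (simp add: pl_def)
    ultimately show ?thesis unfolding set_n_lists by blast
  qed
  moreover have "distinct pl"
  proof -
    have "inj_on (\<lambda>j. ix4 (p (n4 j))) {0..<4}"
    proof (rule inj_onI)
      fix a b assume ab: "a \<in> {0..<4}" "b \<in> {0..<4}" "ix4 (p (n4 a)) = ix4 (p (n4 b))"
      then have "p (n4 a) = p (n4 b)" by (simp add: ix4_inj)
      then have "n4 a = n4 b" using permutes_inj[OF pp] by (simp add: inj_eq)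
      then show "a = b" using ab ix4_n4 by (metis atLeastLessThan_iff)
    qed
    then show ?thesis unfolding pl_def by (simp add: distinct_map)
  qed
  moreover have "prod_list gl = 1"
  proof -
    have "(\<Prod>i\<in>UNIV. e $ i) = (\<Prod>i\<in>UNIV. e $ p i)" using prod.permute[OF pp, of "\<lambda>i. e $ i"] by (simp add: o_def)
    then have "e $ p 0 * e $ p 1 * e $ p 2 * e $ p 3 = 1" using pe by (simp add: prod_4 four0 ac_simps)
    moreover have "of_int (prod_list gl) = e $ p 0 * e $ p 1 * e $ p 2 * e $ p 3"
      unfolding gl_def upt4 using oe by (simp add: n4_vals)
    ultimately have "(of_int (prod_list gl) :: real) = 1" by simp
    then show ?thesis by simp
  qed
  ultimately show ?thesis unfolding VL_def by auto
qed

definition invp :: "nat list \<Rightarrow> nat list" where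
  "invp p = map (\<lambda>a. if p!0 = a then 0 else if p!1 = a then 1 else if p!2 = a then 2 else 3) [0..<4]"

definition okf :: "int list \<Rightarrow> nat list \<Rightarrow> bool" where
  "okf g p \<longleftrightarrow> length g = 4 \<and> pv p \<and> pv (invp p) \<and>
     list_all (\<lambda>a. p ! (invp p ! a) = a \<and> invp p ! (p ! a) = a \<and> (g ! a = 1 \<or> g ! a = -1)) [0,1,2,3] \<and>
     g ! (invp p ! 0) * g ! (invp p ! 1) * g ! (invp p ! 2) * g ! (invp p ! 3) = 1"

lemma list4: "(\<forall>a\<in>set [0::nat,1,2,3]. P a) \<longleftrightarrow> (\<forall>a<4. P a)"
  by (auto simp: less_Suc_eq numeral_eq_Suc)

lemma okf_WD4: assumes "okf g p" shows "sm g p \<in> WD4"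
proof -
  let ?q = "invp p"
  have pv: "pv p" "pv ?q" and lg: "length g = 4" using assms by (simp_all add: okf_def)
  have h: "\<forall>a<4. p ! (?q ! a) = a \<and> ?q ! (p ! a) = a \<and> (g ! a = 1 \<or> g ! a = -1)"
    using assms unfolding okf_def list_all_iff list4 by blast
  have hp: "g ! (?q ! 0) * g ! (?q ! 1) * g ! (?q ! 2) * g ! (?q ! 3) = 1" using assms by (simp add: okf_def)
  define pf where "pf = (\<lambda>j. n4 (p ! ix4 j))"
  define qf where "qf = (\<lambda>i. n4 (?q ! ix4 i))"
  define e :: "real^4" where "e = (\<chi> i. of_int (g ! (?q ! ix4 i)))"
  have ixpf: "ix4 (pf j) = p ! ix4 j" for j unfolding pf_def using pv_nth[OF pv(1) ix4_lt] ix4_n4 by blast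
  have ixqf: "ix4 (qf j) = ?q ! ix4 j" for j unfolding qf_def using pv_nth[OF pv(2) ix4_lt] ix4_n4 by blast
  have "pf \<circ> qf = id"
  proof
    fix i have "ix4 (pf (qf i)) = ix4 i" using ixpf ixqf h ix4_lt by simp
    then show "(pf \<circ> qf) i = id i" by (simp add: ix4_inj)
  qed
  moreover have "qf \<circ> pf = id"
  proof
    fix i have "ix4 (qf (pf i)) = ix4 i" using ixpf ixqf h ix4_lt by simp
    then show "(qf \<circ> pf) i = id i" by (simp add: ix4_inj)
  qed
  ultimately have "bij pf" using o_bij by blast
  then have pp: "pf permutes UNIV" by (intro bij_imp_permutes) auto
  have ee: "e $ i = 1 \<or> e $ i = -1" for i
  proof -
    have "?q ! ix4 i < 4" using pv_nth[OF pv(2) ix4_lt] .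
    then show ?thesis using h unfolding e_def by force
  qed
  have epf: "e $ pf j = of_int (g ! ix4 j)" for j
    unfolding e_def using ixpf h ix4_lt by simp
  have "(\<Prod>i\<in>UNIV. e $ i) = 1"
  proof -
    have "(\<Prod>i\<in>UNIV. e $ i) = of_int (g ! (?q ! 1) * g ! (?q ! 2) * g ! (?q ! 3) * g ! (?q ! 0))"
      unfolding prod_4 e_def by (simp add: ix4_vals)
    also have "\<dots> = 1" using hp by (simp add: ac_simps)
    finally show ?thesis .
  qed
  moreover have "sm g p = diag_mat e ** perm_mat pf"
  proof -
    have "sm g p $ i $ j = (diag_mat e ** perm_mat pf) $ i $ j" for i j
    proof -
      have "ix4 i = p ! ix4 j \<longleftrightarrow> i = pf j" using ixpf ix4_inj by metis
      then show ?thesis unfolding DP sm_def using epf by auto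
    qed
    then show ?thesis by (simp add: vec_eq_iff)
  qed
  ultimately show ?thesis unfolding WD4_def using ee pp by blast
qed

lemma sm_inj: assumes "length g = 4" "length g' = 4" "pv p" "pv p'" "\<forall>a<4. g ! a \<noteq> 0" "sm g p = sm g' p'"
  shows "g = g' \<and> p = p'"
proof -
  have "g ! a = g' ! a \<and> p ! a = p' ! a" if a: "a < 4" for a
  proof -
    have pa: "p ! a < 4" using pv_nth[OF assms(3) a] .
    have "sm g p $ n4 (p ! a) $ n4 a = of_int (g ! a)" using a pa by (simp add: sm_def ix4_n4)
    moreover have "sm g' p' $ n4 (p ! a) $ n4 a = (if p ! a = p' ! a then of_int (g' ! a) else 0)"
      using a pa by (simp add: sm_def ix4_n4)
    ultimately have "of_int (g ! a) = (if p ! a = p' ! a then of_int (g' ! a) else (0::real))" using assms(6) by simp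
    then show ?thesis using assms(5) a by (auto split: if_splits)
  qed
  then show ?thesis using assms(1-4) by (auto intro!: nth_equalityI simp: pv_def)
qed



section \<open>Fix rho\<close>

definition tab :: "(int list \<times> (int list \<times> nat list)) list" where "tab = [([2,0,0,0],([1,1,1,1],[0,1,2,3])), ([0,2,0,0],([1,1,-1,-1],[2,3,0,1])), ([0,0,2,0],([1,-1,-1,1],[1,0,3,2])), ([0,0,0,2],([1,-1,1,-1],[3,2,1,0])), ([-2,0,0,0],([-1,-1,-1,-1],[0,1,2,3])), ([0,-2,0,0],([-1,-1,1,1],[2,3,0,1])), ([0,0,-2,0],([-1,1,1,-1],[1,0,3,2])), ([0,0,0,-2],([-1,1,-1,1],[3,2,1,0])), ([1,1,1,1],([-1,-1,-1,-1],[0,3,1,2])), ([1,1,1,-1],([-1,1,1,-1],[2,0,1,3])), ([1,1,-1,1],([-1,-1,1,1],[3,1,0,2])), ([1,1,-1,-1],([1,-1,-1,1],[3,0,2,1])), ([1,-1,1,1],([-1,1,-1,1],[1,3,2,0])), ([1,-1,1,-1],([1,-1,1,-1],[2,1,3,0])), ([1,-1,-1,1],([1,1,-1,-1],[1,2,0,3])), ([1,-1,-1,-1],([-1,-1,-1,-1],[0,2,3,1])), ([-1,1,1,1],([1,1,1,1],[0,2,3,1])), ([-1,1,1,-1],([-1,-1,1,1],[1,2,0,3])), ([-1,1,-1,1],([-1,1,-1,1],[2,1,3,0])), ([-1,1,-1,-1],([1,-1,1,-1],[1,3,2,0])), ([-1,-1,1,1],([-1,1,1,-1],[3,0,2,1])),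 ([-1,-1,1,-1],([1,1,-1,-1],[3,1,0,2])), ([-1,-1,-1,1],([1,-1,-1,1],[2,0,1,3])), ([-1,-1,-1,-1],([1,1,1,1],[0,3,1,2]))]"

definition FL :: "(int list \<times> nat list) list" where "FL = map snd tab"

definition smp :: "int list \<times> nat list \<Rightarrow> real^4^4" where "smp v = sm (fst v) (snd v)"

definition phi :: "quat \<Rightarrow> real^4^4" where "phi q = smp (the (map_of tab (untq q)))"

definition cndall :: "int list \<Rightarrow> nat list \<Rightarrow> bool" where
  "cndall g p \<longleftrightarrow> list_all (\<lambda>a. list_all (\<lambda>b. cnd g p a b) [0,1,2,3]) [0,1,2,3]"

lemma cndall_iff: "cndall g p \<longleftrightarrow> (\<forall>a<4. \<forall>b<4. cnd g p a b)"
  unfolding cndall_def list_all_iff list4 ..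

definition fcv :: "int list \<times> nat list \<Rightarrow> int list \<times> nat list \<Rightarrow> int list \<times> nat list" where
  "fcv v w = (fcg (fst v) (snd v) (fst w) (snd w), fcp (snd v) (snd w))"

lemma G1: "map fst tab = HL" by code_simp
lemma G2: "list_all (\<lambda>(g,p). okf g p \<and> cndall g p) FL" by code_simp
lemma G3: "distinct (map snd tab)" by code_simp
lemma G4: "list_all (\<lambda>(g,p). cndall g p \<longrightarrow> List.member FL (g,p)) VL" by code_simp
lemma G5: "list_all (\<lambda>(p,v). list_all (\<lambda>(q,w). map_of tab (hq p q) = Some (fcv v w)) tab) tab"
  by code_simp

lemma FL_ok: "(g, p) \<in> set FL \<Longrightarrow> okf g p \<and> cndall g p"
  using G2 unfolding list_all_iff by fastforce

lemma VL_pv: "(g, p) \<in> set VL \<Longrightarrow> pv p"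
proof -
  assume "(g, p) \<in> set VL"
  then have "p \<in> set (List.n_lists 4 [0,1,2,3])" unfolding VL_def by simp
  then have "length p = 4" "set p \<subseteq> set [0,1,2,3]" unfolding set_n_lists by auto
  then show "pv p" unfolding pv_def list_all_iff by auto
qed

lemma Fix_car: "carrier Fix_rho = smp ` set FL"
proof
  show "carrier Fix_rho \<subseteq> smp ` set FL"
  proof
    fix x assume "x \<in> carrier Fix_rho"
    then have x: "x \<in> WD4" "rho ** x ** matrix_inv rho = x" by (auto simp: Fix_rho_def)
    obtain g p where gp: "(g, p) \<in> set VL" "x = sm g p" using WD4_sub[OF x(1)] by blast
    have "cndall g p" using x(2) gp comm_iff[OF VL_pv[OF gp(1)]] fix_iff cndall_iff by simp
    then have "(g, p) \<in> set FL" using G4 gp(1) unfolding list_all_iff List.member_iff by fastforce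
    then show "x \<in> smp ` set FL" using gp by (force simp: smp_def)
  qed
next
  show "smp ` set FL \<subseteq> carrier Fix_rho"
  proof
    fix x assume "x \<in> smp ` set FL"
    then obtain g p where gp: "(g, p) \<in> set FL" "x = sm g p" by (auto simp: smp_def)
    then have ok: "okf g p" "cndall g p" using FL_ok by blast+
    have "pv p" using ok by (simp add: okf_def)
    then have "rho ** x ** matrix_inv rho = x" using fix_iff comm_iff ok(2) cndall_iff gp by simp
    then show "x \<in> carrier Fix_rho" using okf_WD4[OF ok(1)] gp by (simp add: Fix_rho_def)
  qed
qed

lemma tab_lookup: "k \<in> set HL \<Longrightarrow> \<exists>v. map_of tab k = Some v \<and> (k, v) \<in> set tab"
proof -
  assume "k \<in> set HL"
  then have "k \<in> fst ` set tab" using G1 by (metis list.set_map)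
  then obtain v where "map_of tab k = Some v" by (meson map_of_eq_None_iff not_None_eq)
  then show ?thesis by (auto intro: map_of_SomeD)
qed

lemma phi_tq: "k \<in> set HL \<Longrightarrow> phi (tq k) = smp (the (map_of tab k))"
  by (simp add: phi_def untq_tq HL_len)

lemma tab_FL: "(k, v) \<in> set tab \<Longrightarrow> v \<in> set FL"
  unfolding FL_def by force

lemma phi_hom: "phi \<in> hom H1 Fix_rho"
proof (rule homI)
  fix x assume "x \<in> carrier H1"
  then obtain k where k: "k \<in> set HL" "x = tq k" unfolding H1_car by auto
  then obtain v where "map_of tab k = Some v" "(k, v) \<in> set tab" using tab_lookup by blast
  then show "phi x \<in> carrier Fix_rho" using k phi_tq tab_FL unfolding Fix_car by auto
next
  fix x y assume "x \<in> carrier H1" "y \<in> carrier H1"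
  then obtain p q where pq: "p \<in> set HL" "x = tq p" "q \<in> set HL" "y = tq q" unfolding H1_car by auto
  obtain v where v: "map_of tab p = Some v" "(p, v) \<in> set tab" using tab_lookup pq by blast
  obtain w where w: "map_of tab q = Some w" "(q, w) \<in> set tab" using tab_lookup pq by blast
  have m: "map_of tab (hq p q) = Some (fcv v w)"
    using G5 v(2) w(2) unfolding list_all_iff by fastforce
  have pvw: "pv (snd w)" using FL_ok[of "fst w" "snd w"] tab_FL[OF w(2)] by (simp add: okf_def)
  have "phi (x \<otimes>\<^bsub>H1\<^esub> y) = phi (tq (hq p q))" using HL_mult pq by (simp add: H1_def)
  also have "\<dots> = smp (fcv v w)" using HL_mult pq m phi_tq by simp
  also have "\<dots> = smp v ** smp w" unfolding smp_def fcv_def using sm_mult[OF pvw] by simp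
  also have "\<dots> = phi x \<otimes>\<^bsub>Fix_rho\<^esub> phi y" using pq v w phi_tq by (simp add: Fix_rho_def)
  finally show "phi (x \<otimes>\<^bsub>H1\<^esub> y) = phi x \<otimes>\<^bsub>Fix_rho\<^esub> phi y" .
qed

lemma phi_image: "phi ` carrier H1 = carrier Fix_rho"
proof
  show "phi ` carrier H1 \<subseteq> carrier Fix_rho" using phi_hom by (auto simp: hom_def)
next
  show "carrier Fix_rho \<subseteq> phi ` carrier H1"
  proof
    fix x assume "x \<in> carrier Fix_rho"
    then obtain v where v: "v \<in> set FL" "x = smp v" unfolding Fix_car by auto
    then obtain k where kv: "(k, v) \<in> set tab" unfolding FL_def by auto
    then have k: "k \<in> set HL" using G1 by (metis fst_conv image_eqI list.set_map)
    have "distinct (map fst tab)" using G1 C3 by simp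
    then have "map_of tab k = Some v" using kv by (rule map_of_is_SomeI)
    then have "phi (tq k) = x" using phi_tq k v by simp
    then show "x \<in> phi ` carrier H1" using k unfolding H1_car by blast
  qed
qed

lemma phi_inj: "inj_on phi (carrier H1)"
proof (rule inj_onI)
  fix x y assume "x \<in> carrier H1" "y \<in> carrier H1" and e: "phi x = phi y"
  then obtain p q where pq: "p \<in> set HL" "x = tq p" "q \<in> set HL" "y = tq q" unfolding H1_car by auto
  obtain v where v: "map_of tab p = Some v" "(p, v) \<in> set tab" using tab_lookup pq by blast
  obtain w where w: "map_of tab q = Some w" "(q, w) \<in> set tab" using tab_lookup pq by blast
  have okv: "okf (fst v) (snd v)" and okw: "okf (fst w) (snd w)"
    using FL_ok tab_FL v w by (metis prod.collapse)+
  have nz: "\<forall>a<4. fst v ! a \<noteq> 0"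
    using okv unfolding okf_def list_all_iff list4 by force
  have "smp v = smp w" using e pq v w phi_tq by simp
  then have "v = w" using sm_inj[of "fst v" "fst w" "snd v" "snd w"] okv okw nz
    unfolding smp_def okf_def by (simp add: prod_eq_iff)
  moreover have "inj_on snd (set tab)" using G3 by (simp add: distinct_map)
  ultimately have "(p, v) = (q, w)" using v w by (metis inj_onD snd_conv)
  then show "x = y" using pq by simp
qed

lemma Fix_iso: "Fix_rho \<cong> H1"
proof -
  have "phi \<in> iso H1 Fix_rho" using phi_hom phi_image phi_inj by (simp add: iso_def bij_betw_def)
  then have "H1 \<cong> Fix_rho" by (rule is_isoI)
  then show ?thesis by (rule group.iso_sym[OF group_H1])
qed

theorem proposition5p6:
  shows "Fix_rho \<cong> H1 \<and> group H1 \<and> order H1 = 24 \<and> H1 \<cong> Q8_rtimes_C3 \<and> binary_tetrahedral H1"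
  using Fix_iso group_H1 order_H1 H1_iso_sd bt_H1 by blast

end
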